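(* Let $w=(i,\epsilon)\in\mathcal W_0(d)$ and $i_0=\min\{i(l): l\in[d]\}$. Then for every block $\{l,m\}$ of the pair partition $\pi(w)$ we have $i(l)=i_0$ if and only if $i(m)=i_0$.
   Context: Fix an integer $p\ge2$; $F_p=\langle x_0,x_1,\dots\mid x_nx_k=x_kx_{n+p-1}\ \forall k<n\rangle$ with identity $e$. For $d\in\mathbb N$ and $[d]=\{1,\dots,d\}$, a word of length $d$ is a tuple $w=(x_{i(1)}^{\epsilon(1)},\dots,x_{i(d)}^{\epsilon(d)})$ with $i:[d]\to\mathbb N_0$, $\epsilon:[d]\to\{1,-1\}$, written $w=(i,\epsilon)$; $\mathrm{eval}(w)=x_{i(1)}^{\epsilon(1)}\cdots x_{i(d)}^{\epsilon(d)}$; $\mathcal W(d)$ is the set of words of length $d$ and $\mathcal W_0(d)=\{w\in\mathcal W(d):\mathrm{eval}(w)=e\}$. Rewriting relations: ($\rightsquigarrow$) a consecutive pair $(x_a^{-1},x_b)$ is replaced by $(x_b,x_{a+p-1}^{-1})$ if $a>b$, by $(x_{b+p-1},x_a^{-1})$ if $a<b$, by $(x_b,x_a^{-1})$ if $a=b$; ($\rightarrowtail$, on $\rightsquigarrow$-irreducible words) $(x_a,x_b)$ with $b-p+1>a$ is replaced by $(x_{b-p+1},x_a)$, and $(x_a^{-1},x_b^{-1})$ with $a-p+1>b$ by $(x_b^{-1},x_{a-p+1}^{-1})$. The normal form $\mathrm{NF}(w)$ is obtained by applying $\rightsquigarrow$ until irreducible and then $\rightarrowtail$ until irreducible (well defined).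 Each step swaps two adjacent letters; $\tau(w)\in S_d$ is defined by letting $\tau(w)(l)$ be the position in $\mathrm{NF}(w)$ of the letter originating from the $l$-th letter of $w$. For $w\in\mathcal W_0(d)$ ($d$ even), $\pi(w)$ is the pair partition of $[d]$ whose blocks are the pairs $\{l,m\}$ with $\tau(w)(l)+\tau(w)(m)=d+1$ (the image under $\tau(w)^{-1}$ of the rainbow partition $\{\{1,d\},\{2,d-1\},\dots,\{d/2,d/2+1\}\}$). *)

theory Defs
  imports Main
begin

text \<open>A letter x_a^e of the alphabet of F_p is a pair (a, e) with e in {1,-1}.
  A word is a list of letters.\<close>
type_synonym letter = "nat \<times> int"

inductive fp_move :: "nat \<Rightarrow> letter list \<Rightarrow> letter list \<Rightarrow> bool" for p :: nat where
  cancel_pos: "fp_move p (u @ [(a, 1), (a, -1)] @ v) (u @ v)"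
| cancel_neg: "fp_move p (u @ [(a, -1), (a, 1)] @ v) (u @ v)"
| rel: "k < n \<Longrightarrow> fp_move p (u @ [(n, 1), (k, 1)] @ v) (u @ [(k, 1), (n + p - 1, 1)] @ v)"

definition eval_is_identity :: "nat \<Rightarrow> letter list \<Rightarrow> bool" where
  "eval_is_identity p w \<longleftrightarrow> equivclp (fp_move p) w []"

definition word_of :: "(nat \<Rightarrow> nat) \<Rightarrow> (nat \<Rightarrow> int) \<Rightarrow> nat \<Rightarrow> letter list" where
  "word_of i eps d = map (\<lambda>l. (i l, eps l)) [1..<Suc d]"

text \<open>Labelled letters (origin position, index, exponent), to track letters through rewriting.\<close>
type_synonym lletter = "nat \<times> nat \<times> int"

definition labelled_word_of :: "(nat \<Rightarrow> nat) \<Rightarrow> (nat \<Rightarrow> int) \<Rightarrow> nat \<Rightarrow> lletter list" where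
  "labelled_word_of i eps d = map (\<lambda>l. (l, i l, eps l)) [1..<Suc d]"

inductive sq_step :: "nat \<Rightarrow> lletter list \<Rightarrow> lletter list \<Rightarrow> bool" for p :: nat where
  gt: "a > b \<Longrightarrow> sq_step p (u @ [(l, a, -1), (m, b, 1)] @ v) (u @ [(m, b, 1), (l, a + p - 1, -1)] @ v)"
| lt: "a < b \<Longrightarrow> sq_step p (u @ [(l, a, -1), (m, b, 1)] @ v) (u @ [(m, b + p - 1, 1), (l, a, -1)] @ v)"
| eq: "a = b \<Longrightarrow> sq_step p (u @ [(l, a, -1), (m, b, 1)] @ v) (u @ [(m, b, 1), (l, a, -1)] @ v)"

text \<open>The second rewriting relation (tailed arrow), on squiggly-irreducible words.
  The condition b - p + 1 > a is written a + p < b + 1 (no natural-number truncation).\<close>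
inductive tl_step :: "nat \<Rightarrow> lletter list \<Rightarrow> lletter list \<Rightarrow> bool" for p :: nat where
  pos: "\<lbrakk>\<not> (\<exists>z. sq_step p (u @ [(l, a, 1), (m, b, 1)] @ v) z); a + p < b + 1\<rbrakk>
        \<Longrightarrow> tl_step p (u @ [(l, a, 1), (m, b, 1)] @ v) (u @ [(m, b + 1 - p, 1), (l, a, 1)] @ v)"
| neg: "\<lbrakk>\<not> (\<exists>z. sq_step p (u @ [(l, a, -1), (m, b, -1)] @ v) z); b + p < a + 1\<rbrakk>
        \<Longrightarrow> tl_step p (u @ [(l, a, -1), (m, b, -1)] @ v) (u @ [(m, b, -1), (l, a + 1 - p, -1)] @ v)"

definition labelled_NF :: "nat \<Rightarrow> lletter list \<Rightarrow> lletter list \<Rightarrow> bool" where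
  "labelled_NF p ws0 ws \<longleftrightarrow>
     (\<exists>ws1. (sq_step p)\<^sup>*\<^sup>* ws0 ws1 \<and> \<not> (\<exists>z. sq_step p ws1 z)
        \<and> (tl_step p)\<^sup>*\<^sup>* ws1 ws \<and> \<not> (\<exists>z. tl_step p ws z))"

definition tau :: "lletter list \<Rightarrow> nat \<Rightarrow> nat" where
  "tau ws l = Suc (THE k. k < length ws \<and> fst (ws ! k) = l)"

definition pi_part :: "nat \<Rightarrow> (nat \<Rightarrow> nat) \<Rightarrow> nat set set" where
  "pi_part d t = {{l, m} | l m. l \<in> {1..d} \<and> m \<in> {1..d} \<and> t l + t m = d + 1}"

end

theory Submission
  imports Defs
begin


definition merge_at :: "nat \<Rightarrow> nat \<Rightarrow> (nat \<Rightarrow> nat \<Rightarrow> 'a) \<Rightarrow> (nat \<Rightarrow> nat \<Rightarrow> 'a)" where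
 "merge_at p n F = (\<lambda>j. if j < n then F j else if j = n then (\<lambda>m. F (n + m mod p) (m div p)) else F (j + p - 1))"
definition split_at :: "nat \<Rightarrow> nat \<Rightarrow> (nat \<Rightarrow> nat \<Rightarrow> 'a) \<Rightarrow> (nat \<Rightarrow> nat \<Rightarrow> 'a)" where
 "split_at p n F = (\<lambda>j. if j < n then F j else if j < n + p then (\<lambda>m. F n (m * p + (j - n))) else F (j + 1 - p))"

lemma ms: "p \<ge> 1 \<Longrightarrow> merge_at p n (split_at p n F) = F"
  unfolding merge_at_def split_at_def
  by (auto simp: fun_eq_iff add.commute[of "_ * p"] mult.commute)

lemma sm: "p \<ge> 1 \<Longrightarrow> split_at p n (merge_at p n F) = F"
proof -
  assume p: "p \<ge> 1"
  show ?thesis unfolding merge_at_def split_at_def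
  proof (intro ext)
    fix j m
    show "(if j < n then (\<lambda>j. if j < n then F j else if j = n then \<lambda>m. F (n + m mod p) (m div p) else F (j + p - 1)) j
          else if j < n + p then \<lambda>m. (\<lambda>j. if j < n then F j else if j = n then \<lambda>m. F (n + m mod p) (m div p) else F (j + p - 1)) n (m * p + (j - n))
               else (\<lambda>j. if j < n then F j else if j = n then \<lambda>m. F (n + m mod p) (m div p) else F (j + p - 1)) (j + 1 - p)) m = F j m"
    proof (cases "j < n")
      case False
      show ?thesis
      proof (cases "j < n + p")
        case True
        have r: "j - n < p" using True False by simp
        have "(m * p + (j - n)) mod p = j - n" using r by (metis mod_mult_self3 mod_less mult.commute)
        moreover have "(m * p + (j - n)) div p = m" using r by simp
        moreover have "n + (j - n) = j" using False by simp
        ultimately show ?thesis using True False by simp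
      next
        case False2: False
        have "\<not> j + 1 - p < n" "j + 1 - p \<noteq> n" "j + 1 - p + p - 1 = j" using False2 False p by auto
        then show ?thesis using False2 False p by simp
      qed
    qed simp
  qed
qed

lemma rel: "p \<ge> 1 \<Longrightarrow> k < n \<Longrightarrow> merge_at p n (merge_at p k F) = merge_at p k (merge_at p (n + p - 1) F)"
proof -
  assume p: "p \<ge> 1" and kn: "k < n"
  show ?thesis unfolding merge_at_def
  proof (intro ext)
    fix j m
    have mp: "m mod p < p" using p by simp
    consider "j < k" | "j = k" | "k < j \<and> j < n" | "j = n" | "n < j" by linarith
    then show "(if j < n then (\<lambda>j. if j < k then F j else if j = k then \<lambda>m. F (k + m mod p) (m div p) else F (j + p - 1)) j
          else if j = n then \<lambda>m. (\<lambda>j. if j < k then F j else if j = k then \<lambda>m. F (k + m mod p) (m div p) else F (j + p - 1)) (n + m mod p) (m div p)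
               else (\<lambda>j. if j < k then F j else if j = k then \<lambda>m. F (k + m mod p) (m div p) else F (j + p - 1)) (j + p - 1)) m =
         (if j < k then (\<lambda>j. if j < n + p - 1 then F j else if j = n + p - 1 then \<lambda>m. F (n + p - 1 + m mod p) (m div p) else F (j + p - 1)) j
          else if j = k then \<lambda>m. (\<lambda>j. if j < n + p - 1 then F j else if j = n + p - 1 then \<lambda>m. F (n + p - 1 + m mod p) (m div p) else F (j + p - 1)) (k + m mod p) (m div p)
               else (\<lambda>j. if j < n + p - 1 then F j else if j = n + p - 1 then \<lambda>m. F (n + p - 1 + m mod p) (m div p) else F (j + p - 1)) (j + p - 1)) m"
    proof cases
      case 1
      then have "j < n + p - 1" using kn p by simp
      then show ?thesis using 1 kn p by simp
    next
      case 2
      have "k + m mod p < n + p - 1" using kn mp by linarith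
      then show ?thesis using 2 kn p by simp
    next
      case 3
      have "j + p - 1 < n + p - 1" "\<not> j < k" "j \<noteq> k" using 3 p by auto
      then show ?thesis using 3 by simp
    next
      case 4 then show ?thesis using kn p mp by (simp add: algebra_simps)
    next
      case 5
      have "\<not> j < n" "j \<noteq> n" "\<not> j < k" "j \<noteq> k" "\<not> j + p - 1 < k" "j + p - 1 \<noteq> k"
        "\<not> j + p - 1 < n + p - 1" "j + p - 1 \<noteq> n + p - 1" using 5 kn p by auto
      then show ?thesis by simp
    qed
  qed
qed

lemma gtI: "p \<ge> 1 \<Longrightarrow> b < a \<Longrightarrow> split_at p a (merge_at p b G) = merge_at p b (split_at p (a + p - 1) G)"
  by (metis rel ms sm)

lemma ltI: "p \<ge> 1 \<Longrightarrow> a < b \<Longrightarrow> split_at p a (merge_at p b G) = merge_at p (b + p - 1) (split_at p a G)"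
  by (metis rel ms sm)

lemma tlposI: "p \<ge> 1 \<Longrightarrow> a + p < b + 1 \<Longrightarrow> merge_at p a (merge_at p b G) = merge_at p (b + 1 - p) (merge_at p a G)"
proof -
  assume p: "p \<ge> 1" and ab: "a + p < b + 1"
  have "merge_at p (b + 1 - p) (merge_at p a G) = merge_at p a (merge_at p (b + 1 - p + p - 1) G)"
    using rel[OF p, of a "b + 1 - p" G] ab by linarith
  moreover have "b + 1 - p + p - 1 = b" using ab by simp
  ultimately show ?thesis by simp
qed

lemma tlnegI: "p \<ge> 1 \<Longrightarrow> b + p < a + 1 \<Longrightarrow> split_at p a (split_at p b G) = split_at p b (split_at p (a + 1 - p) G)"
proof -
  assume p: "p \<ge> 1" and ab: "b + p < a + 1"
  define n where "n = a + 1 - p"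
  have bn: "b < n" and na: "n + p - 1 = a" using ab by (auto simp: n_def)
  define X where "X = split_at p b (split_at p n G)"
  have "merge_at p n (merge_at p b X) = G" unfolding X_def by (simp only: ms[OF p])
  moreover have "merge_at p n (merge_at p b X) = merge_at p b (merge_at p a X)"
    using rel[OF p bn] na by simp
  ultimately have "merge_at p b (merge_at p a X) = G" by simp
  then have "split_at p a (split_at p b G) = X"
    by (metis sm p)
  then show ?thesis unfolding X_def n_def .
qed

definition act :: "nat \<Rightarrow> letter \<Rightarrow> (nat \<Rightarrow> nat \<Rightarrow> 'a) \<Rightarrow> (nat \<Rightarrow> nat \<Rightarrow> 'a)" where
  "act p x F = (if snd x = 1 then merge_at p (fst x) F else split_at p (fst x) F)"

definition Phi :: "nat \<Rightarrow> letter list \<Rightarrow> (nat \<Rightarrow> nat \<Rightarrow> 'a) \<Rightarrow> (nat \<Rightarrow> nat \<Rightarrow> 'a)" where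
  "Phi p w F = foldr (act p) w F"

lemma Phi_Nil[simp]: "Phi p [] F = F" by (simp add: Phi_def)
lemma Phi_Cons[simp]: "Phi p (x # w) F = act p x (Phi p w F)" by (simp add: Phi_def)
lemma Phi_append[simp]: "Phi p (u @ v) F = Phi p u (Phi p v F)" by (simp add: Phi_def)

lemma act_pos[simp]: "act p (a, 1) F = merge_at p a F" by (simp add: act_def)
lemma act_neg[simp]: "act p (a, -1) F = split_at p a F" by (simp add: act_def)

lemma fp_move_Phi: "fp_move p w w' \<Longrightarrow> p \<ge> 1 \<Longrightarrow> Phi p w F = Phi p w' F"
  by (induction rule: fp_move.induct) (simp_all add: ms sm rel)

lemma equivclp_Phi: "equivclp (fp_move p) w w' \<Longrightarrow> p \<ge> 1 \<Longrightarrow> Phi p w F = Phi p w' F"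
proof (induction rule: equivclp_induct)
  case base then show ?case by simp
next
  case (step y z)
  have "Phi p y F = Phi p z F" using step.hyps(2) fp_move_Phi[OF _ step.prems, of y z F] fp_move_Phi[OF _ step.prems, of z y F] by auto
  then show ?case using step.IH step.prems by simp
qed

lemma sq_Phi: "sq_step p xs ys \<Longrightarrow> p \<ge> 1 \<Longrightarrow> Phi p (map snd xs) F = Phi p (map snd ys) F"
  by (induction rule: sq_step.induct) (simp_all add: gtI ltI sm ms)

lemma tl_Phi: "tl_step p xs ys \<Longrightarrow> p \<ge> 1 \<Longrightarrow> Phi p (map snd xs) F = Phi p (map snd ys) F"
  by (induction rule: tl_step.induct) (simp_all add: tlposI tlnegI)

fun pnf :: "nat \<Rightarrow> nat list \<Rightarrow> bool" where
  "pnf p (a # b # r) = (b < a + p \<and> pnf p (b # r))"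
| "pnf p _ = True"

definition posw :: "nat list \<Rightarrow> letter list" where "posw xs = map (\<lambda>a. (a, 1)) xs"
definition negw :: "nat list \<Rightarrow> letter list" where "negw xs = map (\<lambda>a. (a, -1)) xs"

definition F0 :: "nat \<Rightarrow> nat \<Rightarrow> nat \<times> nat" where "F0 = (\<lambda>j m. (j, m))"

lemma posw_simps[simp]: "posw [] = []" "posw (a # r) = (a, 1) # posw r" "posw (u @ v) = posw u @ posw v"
  by (simp_all add: posw_def)
lemma negw_simps[simp]: "negw [] = []" "negw (a # r) = (a, -1) # negw r" "negw (u @ v) = negw u @ negw v"
  by (simp_all add: negw_def)

lemma pnf_tl: "pnf p (a # r) \<Longrightarrow> pnf p r"
  by (cases r) auto

lemma right_leaves:
  assumes "p \<ge> 1" "pnf p P" "P = [] \<or> hd P < j"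
  shows "Phi p (posw P) F0 j = F0 (j + (p - 1) * length P)"
  using assms(2,3)
proof (induction P arbitrary: j)
  case Nil then show ?case by simp
next
  case (Cons a r)
  have aj: "a < j" using Cons.prems by simp
  have "r = [] \<or> hd r < j + p - 1"
  proof (cases r)
    case (Cons b r') then show ?thesis using Cons.prems aj by auto
  qed simp
  then have "Phi p (posw r) F0 (j + p - 1) = F0 (j + p - 1 + (p - 1) * length r)"
    using Cons.IH pnf_tl[OF Cons.prems(1)] by blast
  moreover have "j + p - 1 + (p - 1) * length r = j + (p - 1) * length (a # r)"
    using assms(1) by (cases p) simp_all
  ultimately show ?case using aj by (simp add: merge_at_def)
qed

lemma snd_zero: "snd (Phi p (posw P) F0 j 0) = 0"
proof (induction P arbitrary: j)
  case Nil then show ?case by (simp add: F0_def)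
next
  case (Cons a r) then show ?case by (simp add: merge_at_def)
qed

lemma not_leaf:
  assumes "p \<ge> 2"
  shows "Phi p (posw (a # r)) F0 a \<noteq> F0 c"
proof
  assume h: "Phi p (posw (a # r)) F0 a = F0 c"
  have "Phi p (posw (a # r)) F0 a 1 = Phi p (posw r) F0 (a + 1) 0"
    using assms by (simp add: merge_at_def)
  then have "snd (Phi p (posw (a # r)) F0 a 1) = 0" using snd_zero by metis
  then show False using h by (simp add: F0_def)
qed

lemma merge_inj: "p \<ge> 1 \<Longrightarrow> merge_at p a F = merge_at p a G \<Longrightarrow> F = G"
  by (metis sm)

lemma pnf_unique:
  assumes p: "p \<ge> 2"
  shows "pnf p P \<Longrightarrow> pnf p Q \<Longrightarrow> Phi p (posw P) F0 = Phi p (posw Q) F0 \<Longrightarrow> P = Q"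
proof (induction P arbitrary: Q)
  case Nil
  show ?case
  proof (cases Q)
    case (Cons b r)
    have "Phi p (posw Q) F0 b \<noteq> F0 b" using not_leaf[OF p] Cons by blast
    then show ?thesis using Nil.prems(3) by simp
  qed simp
next
  case (Cons a r)
  show ?case
  proof (cases Q)
    case Nil
    have "Phi p (posw (a # r)) F0 a \<noteq> F0 a" using not_leaf[OF p] by blast
    then show ?thesis using Cons.prems(3) Nil by simp
  next
    fix b r' assume Cons2: "Q = b # r'"
    have ab: "a = b"
    proof (rule ccontr)
      assume "a \<noteq> b"
      then consider "a < b" | "b < a" by linarith
      then show False
      proof cases
        case 1
        have "Phi p (posw (a # r)) F0 b = F0 (b + (p - 1) * length (a # r))"
          using right_leaves[of p "a # r" b] Cons.prems(1) 1 p by simp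
        then show False using not_leaf[OF p, of b r'] Cons.prems(3) Cons2 by simp
      next
        case 2
        have "Phi p (posw (b # r')) F0 a = F0 (a + (p - 1) * length (b # r'))"
          using right_leaves[of p "b # r'" a] Cons.prems(2) Cons2 2 p by simp
        moreover have "Phi p (posw (a # r)) F0 = Phi p (posw (b # r')) F0" using Cons.prems(3) Cons2 by simp
        ultimately show False using not_leaf[OF p, of a r] by metis
      qed
    qed
    have "Phi p (posw r) F0 = Phi p (posw r') F0"
      using Cons.prems(3) Cons2 ab merge_inj[of p] p by simp
    then have "r = r'" using Cons.IH pnf_tl Cons.prems Cons2 by blast
    then show ?thesis using ab Cons2 by simp
  qed
qed

lemma neg_inv: "p \<ge> 1 \<Longrightarrow> Phi p (negw N) (Phi p (posw (rev N)) G) = G"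
proof (induction N arbitrary: G)
  case Nil then show ?case by simp
next
  case (Cons b N)
  have "Phi p (posw (rev (b # N))) G = Phi p (posw (rev N)) (merge_at p b G)" by simp
  then show ?case using Cons by (simp add: sm)
qed



lemma pnf_infix: "(\<forall>u a b v. xs = u @ [a, b] @ v \<longrightarrow> b < a + p) \<Longrightarrow> pnf p xs"
proof (induction p xs rule: pnf.induct)
  case (1 p a b r)
  have "b < a + p" using "1.prems"[rule_format, of "[]" a b r] by simp
  moreover have "pnf p (b # r)"
  proof (rule "1.IH", intro allI impI)
    fix u a' b' v assume "b # r = u @ [a', b'] @ v"
    then have "a # b # r = (a # u) @ [a', b'] @ v" by simp
    then show "b' < a' + p" using "1.prems" by blast
  qed
  ultimately show ?case by simp
qed simp_all

lemma L0: "\<forall>y\<in>set r. y \<in> {1, -1::int} \<Longrightarrow> \<forall>u v. x # r \<noteq> u @ [-1, 1] @ v \<Longrightarrow> x = -1 \<Longrightarrow> \<forall>y\<in>set (x # r). y = -1"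
proof (induction r arbitrary: x)
  case Nil then show ?case by simp
next
  case (Cons y r)
  have x: "x = -1" by (rule Cons.prems(3))
  have "y \<noteq> 1"
  proof
    assume "y = 1"
    then have "x # y # r = [] @ [-1, 1] @ r" using x by simp
    then show False using Cons.prems(2)[rule_format, of "[]" r] by blast
  qed
  moreover have "y \<in> {1, -1}" using Cons.prems(1) by simp
  ultimately have y: "y = -1" by blast
  have "\<forall>u v. y # r \<noteq> u @ [-1, 1] @ v"
  proof (intro allI notI)
    fix u v assume "y # r = u @ [-1, 1] @ v"
    then have "x # y # r = (x # u) @ [-1, 1] @ v" by simp
    then show False using Cons.prems(2)[rule_format, of "x # u" v] by blast
  qed
  moreover have "\<forall>z\<in>set r. z \<in> {1, -1}" using Cons.prems(1) by simp
  ultimately have "\<forall>z\<in>set (y # r). z = -1" using Cons.IH y by blast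
  then show ?case using x by simp
qed

lemma L1: "\<forall>y\<in>set xs. y \<in> {1, -1::int} \<Longrightarrow> \<forall>u v. xs \<noteq> u @ [-1, 1] @ v \<Longrightarrow> \<forall>y\<in>set (dropWhile (\<lambda>x. x = 1) xs). y = -1"
proof (induction xs)
  case Nil then show ?case by simp
next
  case (Cons x r)
  show ?case
  proof (cases "x = 1")
    case True
    have "\<forall>u v. r \<noteq> u @ [-1, 1] @ v"
    proof (intro allI notI)
      fix u v assume "r = u @ [-1, 1] @ v"
      then have "x # r = (x # u) @ [-1, 1] @ v" by simp
      then show False using Cons.prems(2)[rule_format, of "x # u" v] by blast
    qed
    moreover have "\<forall>z\<in>set r. z \<in> {1, -1}" using Cons.prems(1) by simp
    ultimately have "\<forall>y\<in>set (dropWhile (\<lambda>x. x = 1) r). y = -1" using Cons.IH by blast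
    then show ?thesis using True by simp
  next
    case False
    then have x: "x = -1" using Cons.prems(1) by simp
    have "\<forall>z\<in>set r. z \<in> {1, -1}" using Cons.prems(1) by simp
    then have "\<forall>y\<in>set (x # r). y = -1" using L0[of r x] Cons.prems(2) x by blast
    then show ?thesis using False by simp
  qed
qed

lemma no_bad_split:
  assumes "\<forall>x\<in>set A. snd (snd x) = (1::int)" "\<forall>x\<in>set B. snd (snd x) = -1"
  shows "A @ B = u @ [x, y] @ v \<Longrightarrow> snd (snd x) = -1 \<Longrightarrow> snd (snd y) = 1 \<Longrightarrow> False"
  using assms
proof (induction A arbitrary: u)
  case Nil
  from Nil.prems(1) have "B = u @ [x, y] @ v" by simp
  then have "y \<in> set B" by simp
  then show ?case using Nil.prems(3,5) by fastforce
next
  case (Cons c A)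
  show ?case
  proof (cases u)
    case Nil
    then have "x = c" using Cons.prems(1) by simp
    then show ?thesis using Cons.prems(2,4) by simp
  next
    case (Cons c' u')
    then have "A @ B = u' @ [x, y] @ v" using Cons.prems(1) by simp
    then show ?thesis using Cons.IH Cons.prems(2-5) by simp
  qed
qed

lemma sq_form: "sq_step p xs ys \<Longrightarrow> \<exists>u l a m b v. xs = u @ [(l, a, -1), (m, b, 1)] @ v"
  by (induction rule: sq_step.induct) (intro exI, rule refl)+

lemma sq_of_form: "\<exists>z. sq_step p (u @ [(l, a, -1), (m, b, 1)] @ v) z"
proof -
  consider "a > b" | "a < b" | "a = b" by linarith
  then show ?thesis
  proof cases
    case 1 then show ?thesis using sq_step.gt[of _ _ p u l m v] by blast
  next
    case 2 then show ?thesis using sq_step.lt[of _ _ p u l m v] by blast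
  next
    case 3 then show ?thesis using sq_step.eq[of _ _ p u l m v] by blast
  qed
qed

lemma sq_lab: "sq_step p xs ys \<Longrightarrow> set (map fst xs) = set (map fst ys) \<and> distinct (map fst xs) = distinct (map fst ys) \<and> length xs = length ys"
  by (induction rule: sq_step.induct) auto

lemma tl_lab: "tl_step p xs ys \<Longrightarrow> set (map fst xs) = set (map fst ys) \<and> distinct (map fst xs) = distinct (map fst ys) \<and> length xs = length ys"
  by (induction rule: tl_step.induct) auto

lemma tl_sg: "tl_step p xs ys \<Longrightarrow> map (snd \<circ> snd) xs = map (snd \<circ> snd) ys"
  by (induction rule: tl_step.induct) simp_all

definition einv :: "(nat \<Rightarrow> nat) \<Rightarrow> nat \<Rightarrow> lletter \<Rightarrow> bool" where
  "einv i i0 x \<longleftrightarrow> i0 \<le> fst (snd x) \<and> (fst (snd x) = i0 \<longleftrightarrow> i (fst x) = i0) \<and> snd (snd x) \<in> {1, -1}"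

lemma einv_swap: "\<forall>x\<in>set (u @ [x1, x2] @ v). einv i i0 x \<Longrightarrow> einv i i0 y1 \<Longrightarrow> einv i i0 y2 \<Longrightarrow> \<forall>x\<in>set (u @ [y1, y2] @ v). einv i i0 x"
  by auto

lemma sq_einv: "sq_step p xs ys \<Longrightarrow> p \<ge> 1 \<Longrightarrow> \<forall>x\<in>set xs. einv i i0 x \<Longrightarrow> \<forall>x\<in>set ys. einv i i0 x"
proof (induction rule: sq_step.induct)
  case (gt a b u l m v)
  have h: "einv i i0 (l, a, -1)" "einv i i0 (m, b, 1)" using gt.prems(2) by simp_all
  have "einv i i0 (l, a + p - 1, -1)" using h gt.hyps gt.prems(1) unfolding einv_def by auto
  then show ?case using einv_swap[OF gt.prems(2) h(2)] by blast
next
  case (lt a b u l m v)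
  have h: "einv i i0 (l, a, -1)" "einv i i0 (m, b, 1)" using lt.prems(2) by simp_all
  have "einv i i0 (m, b + p - 1, 1)" using h lt.hyps lt.prems(1) unfolding einv_def by auto
  then show ?case using einv_swap[OF lt.prems(2) _ h(1)] by blast
next
  case (eq a b u l m v)
  have h: "einv i i0 (l, a, -1)" "einv i i0 (m, b, 1)" using eq.prems(2) by simp_all
  then show ?case using einv_swap[OF eq.prems(2) h(2) h(1)] by blast
qed

lemma tl_einv: "tl_step p xs ys \<Longrightarrow> p \<ge> 1 \<Longrightarrow> \<forall>x\<in>set xs. einv i i0 x \<Longrightarrow> \<forall>x\<in>set ys. einv i i0 x"
proof (induction rule: tl_step.induct)
  case (pos u l a m b v)
  have h: "einv i i0 (l, a, 1)" "einv i i0 (m, b, 1)" using pos.prems(2) by simp_all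
  have "einv i i0 (m, b + 1 - p, 1)" using h pos.hyps(2) pos.prems(1) unfolding einv_def by auto
  then show ?case using einv_swap[OF pos.prems(2) _ h(1)] by blast
next
  case (neg u l a m b v)
  have h: "einv i i0 (l, a, -1)" "einv i i0 (m, b, -1)" using neg.prems(2) by simp_all
  have "einv i i0 (l, a + 1 - p, -1)" using h neg.hyps(2) neg.prems(1) unfolding einv_def by auto
  then show ?case using einv_swap[OF neg.prems(2) h(2)] by blast
qed



lemma map_snd_lw: "map snd (labelled_word_of i eps d) = word_of i eps d"
  by (simp add: labelled_word_of_def word_of_def)

lemma rt_sq_Phi: "(sq_step p)\<^sup>*\<^sup>* xs ys \<Longrightarrow> p \<ge> 1 \<Longrightarrow> Phi p (map snd xs) F = Phi p (map snd ys) F"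
proof (induction rule: rtranclp_induct)
  case (step y z) then show ?case using sq_Phi[of p y z F] by simp
qed simp

lemma rt_tl_Phi: "(tl_step p)\<^sup>*\<^sup>* xs ys \<Longrightarrow> p \<ge> 1 \<Longrightarrow> Phi p (map snd xs) F = Phi p (map snd ys) F"
proof (induction rule: rtranclp_induct)
  case (step y z) then show ?case using tl_Phi[of p y z F] by simp
qed simp

lemma rt_sq_lab: "(sq_step p)\<^sup>*\<^sup>* xs ys \<Longrightarrow> set (map fst xs) = set (map fst ys) \<and> distinct (map fst xs) = distinct (map fst ys) \<and> length xs = length ys"
proof (induction rule: rtranclp_induct)
  case (step y z) then show ?case using sq_lab[of p y z] by simp
qed simp

lemma rt_tl_lab: "(tl_step p)\<^sup>*\<^sup>* xs ys \<Longrightarrow> set (map fst xs) = set (map fst ys) \<and> distinct (map fst xs) = distinct (map fst ys) \<and> length xs = length ys"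
proof (induction rule: rtranclp_induct)
  case (step y z) then show ?case using tl_lab[of p y z] by simp
qed simp

lemma rt_sq_einv: "(sq_step p)\<^sup>*\<^sup>* xs ys \<Longrightarrow> p \<ge> 1 \<Longrightarrow> \<forall>x\<in>set xs. einv i i0 x \<Longrightarrow> \<forall>x\<in>set ys. einv i i0 x"
proof (induction rule: rtranclp_induct)
  case (step y z)
  have "\<forall>x\<in>set y. einv i i0 x" using step.IH step.prems by blast
  then show ?case using sq_einv[OF step.hyps(2) step.prems(1)] by blast
qed simp

lemma rt_tl_einv: "(tl_step p)\<^sup>*\<^sup>* xs ys \<Longrightarrow> p \<ge> 1 \<Longrightarrow> \<forall>x\<in>set xs. einv i i0 x \<Longrightarrow> \<forall>x\<in>set ys. einv i i0 x"
proof (induction rule: rtranclp_induct)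
  case (step y z)
  have "\<forall>x\<in>set y. einv i i0 x" using step.IH step.prems by blast
  then show ?case using tl_einv[OF step.hyps(2) step.prems(1)] by blast
qed simp

lemma rt_tl_sg: "(tl_step p)\<^sup>*\<^sup>* xs ys \<Longrightarrow> map (snd \<circ> snd) xs = map (snd \<circ> snd) ys"
proof (induction rule: rtranclp_induct)
  case (step y z) then show ?case using tl_sg[of p y z] by (metis (no_types))
qed simp

theorem mainTheorem4:
  fixes p d :: nat and i :: "nat \<Rightarrow> nat" and eps :: "nat \<Rightarrow> int" and ws :: "lletter list"
  assumes "p \<ge> 2"
    and "\<forall>l\<in>{1..d}. eps l \<in> {1, -1}"
    and "eval_is_identity p (word_of i eps d)"
    and "labelled_NF p (labelled_word_of i eps d) ws"
  shows "\<forall>B\<in>pi_part d (tau ws). \<forall>l\<in>B. \<forall>m\<in>B.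
           (i l = Min (i ` {1..d}) \<longleftrightarrow> i m = Min (i ` {1..d}))"
proof -
  have p1: "p \<ge> 1" using assms(1) by simp
  obtain ws1 where s1: "(sq_step p)\<^sup>*\<^sup>* (labelled_word_of i eps d) ws1" and irr1: "\<not> (\<exists>z. sq_step p ws1 z)"
    and t1: "(tl_step p)\<^sup>*\<^sup>* ws1 ws" and irr: "\<not> (\<exists>z. tl_step p ws z)"
    using assms(4) unfolding labelled_NF_def by blast
  define i0 where "i0 = Min (i ` {1..d})"
  define sg :: "lletter \<Rightarrow> int" where "sg = snd \<circ> snd"
  define idx :: "lletter \<Rightarrow> nat" where "idx = fst \<circ> snd"
  have mfl: "map fst (labelled_word_of i eps d) = [1..<Suc d]"
    by (simp add: labelled_word_of_def comp_def)
  have lab: "set (map fst ws) = {1..d}" "distinct (map fst ws)" "length ws = d"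
  proof -
    have l0: "set (map fst (labelled_word_of i eps d)) = {1..d}" "distinct (map fst (labelled_word_of i eps d))"
      "length (labelled_word_of i eps d) = d"
      by (simp_all only: mfl set_upt distinct_upt) (auto simp: labelled_word_of_def)
    show "set (map fst ws) = {1..d}" "distinct (map fst ws)" "length ws = d"
      using rt_sq_lab[OF s1] rt_tl_lab[OF t1] l0 by metis+
  qed
  have einv0: "\<forall>x\<in>set (labelled_word_of i eps d). einv i i0 x"
    unfolding labelled_word_of_def einv_def i0_def using assms(2) by (auto intro: Min_le)
  have einv: "\<forall>x\<in>set ws. einv i i0 x"
    using rt_tl_einv[OF t1 p1 rt_sq_einv[OF s1 p1 einv0]] .
  have PhiI: "Phi p (map snd ws) F = F" for F :: "nat \<Rightarrow> nat \<Rightarrow> nat \<times> nat"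
  proof -
    have "Phi p (map snd ws) F = Phi p (map snd (labelled_word_of i eps d)) F"
      using rt_sq_Phi[OF s1 p1, of F] rt_tl_Phi[OF t1 p1, of F] by simp
    also have "\<dots> = Phi p (word_of i eps d) F" by (simp add: map_snd_lw)
    also have "\<dots> = Phi p [] F"
      using equivclp_Phi[OF assms(3)[unfolded eval_is_identity_def] p1] .
    finally show ?thesis by simp
  qed
  have sg1: "\<forall>u v. map sg ws1 \<noteq> u @ [-1, 1] @ v"
  proof (intro allI notI)
    fix u v assume "map sg ws1 = u @ [-1, 1] @ v"
    then obtain u' x y v' where ws1: "ws1 = u' @ [x, y] @ v'" and "sg x = -1" "sg y = 1"
      by (auto simp: map_eq_append_conv)
    then have "ws1 = u' @ [(fst x, idx x, -1), (fst y, idx y, 1)] @ v'"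
      by (cases x, cases y) (simp add: sg_def idx_def)
    then show False using irr1 sq_of_form[of p u' "fst x" "idx x" "fst y" "idx y" v'] by simp
  qed
  have sgeq: "map sg ws = map sg ws1" using rt_tl_sg[OF t1] unfolding sg_def by simp
  have sgs: "\<forall>y \<in> set (map sg ws1). y \<in> {1, -1}"
  proof -
    have "\<forall>y\<in>set (map sg ws). y \<in> {1, -1}" using einv unfolding einv_def sg_def by auto
    then show ?thesis using sgeq by simp
  qed
  define Pos where "Pos = takeWhile (\<lambda>x. sg x = 1) ws"
  define Neg where "Neg = dropWhile (\<lambda>x. sg x = 1) ws"
  have wsPN: "ws = Pos @ Neg" by (simp add: Pos_def Neg_def)
  have posS: "\<forall>x\<in>set Pos. sg x = 1" by (auto simp: Pos_def dest: set_takeWhileD)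
  have negS: "\<forall>x\<in>set Neg. sg x = -1"
  proof -
    have "\<forall>y\<in>set (dropWhile (\<lambda>x. x = 1) (map sg ws1)). y = -1" using L1[OF sgs sg1] .
    moreover have "dropWhile (\<lambda>x. x = 1) (map sg ws) = map sg Neg" by (simp add: Neg_def dropWhile_map comp_def)
    ultimately show ?thesis using sgeq by simp
  qed
  have irrsq: "\<not> (\<exists>z. sq_step p ws z)"
  proof
    assume "\<exists>z. sq_step p ws z"
    then obtain u l a m b v where "ws = u @ [(l, a, -1), (m, b, 1)] @ v" using sq_form by blast
    then show False using no_bad_split[of Pos Neg u "(l, a, -1)" "(m, b, 1)" v] posS negS wsPN
      by (simp add: sg_def)
  qed
  define P where "P = map idx Pos"
  define N where "N = map idx Neg"
  have mPos: "map snd Pos = posw P"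
    unfolding P_def posw_def map_map using posS by (auto simp: sg_def idx_def)
  have mNeg: "map snd Neg = negw N"
    unfolding N_def negw_def map_map using negS by (auto simp: sg_def idx_def)
  have msw: "map snd ws = posw P @ negw N" using wsPN mPos mNeg by simp
  have pnfP: "pnf p P"
  proof (rule pnf_infix, intro allI impI)
    fix u a b v assume "P = u @ [a, b] @ v"
    then obtain u' x y v' where Pos: "Pos = u' @ [x, y] @ v'" and xa: "idx x = a" and yb: "idx y = b"
      unfolding P_def by (auto simp: map_eq_append_conv)
    have "sg x = 1" "sg y = 1" using posS Pos by auto
    then have wsx: "ws = u' @ [(fst x, a, 1), (fst y, b, 1)] @ (v' @ Neg)"
      using wsPN Pos xa yb by (cases x, cases y) (simp add: sg_def idx_def)
    show "b < a + p"
    proof (rule ccontr)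
      assume "\<not> b < a + p"
      then have "a + p < b + 1" by simp
      then have "tl_step p ws (u' @ [(fst y, b + 1 - p, 1), (fst x, a, 1)] @ (v' @ Neg))"
        using tl_step.pos[of p u' "fst x" a "fst y" b "v' @ Neg"] irrsq wsx by simp
      then show False using irr by blast
    qed
  qed
  have pnfN: "pnf p (rev N)"
  proof (rule pnf_infix, intro allI impI)
    fix u a b v assume "rev N = u @ [a, b] @ v"
    then have "rev (rev N) = rev (u @ [a, b] @ v)" by simp
    then have "N = rev v @ [b, a] @ rev u" by simp
    then obtain u' x y v' where Neg: "Neg = u' @ [y, x] @ v'" and xa: "idx x = a" and yb: "idx y = b"
      unfolding N_def by (auto simp: map_eq_append_conv)
    have "sg x = -1" "sg y = -1" using negS Neg by auto
    then have wsx: "ws = (Pos @ u') @ [(fst y, b, -1), (fst x, a, -1)] @ v'"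
      using wsPN Neg xa yb by (cases x, cases y) (simp add: sg_def idx_def)
    show "b < a + p"
    proof (rule ccontr)
      assume "\<not> b < a + p"
      then have "a + p < b + 1" by simp
      then have "tl_step p ws ((Pos @ u') @ [(fst x, a, -1), (fst y, b + 1 - p, -1)] @ v')"
        using tl_step.neg[of p "Pos @ u'" "fst y" b "fst x" a v'] irrsq wsx by simp
      then show False using irr by blast
    qed
  qed
  have eqP: "P = rev N"
  proof -
    define G where "G = Phi p (posw (rev N)) F0"
    have "Phi p (posw P) F0 = Phi p (posw P) (Phi p (negw N) G)" unfolding G_def using neg_inv[OF p1, of N F0] by simp
    also have "\<dots> = Phi p (map snd ws) G" by (simp add: msw)
    also have "\<dots> = G" by (rule PhiI)
    finally show ?thesis using pnf_unique[OF assms(1) pnfP pnfN] G_def by blast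
  qed
  define k where "k = length Pos"
  have kN: "length Neg = k" using eqP unfolding k_def P_def N_def by (metis length_map length_rev)
  have dk: "d = k + k" using lab(3) wsPN kN k_def by simp
  have sym0: "idx (ws ! j) = idx (ws ! (d - 1 - j))" if j: "j < k" for j
  proof -
    have "ws ! j = Pos ! j" using wsPN j k_def by (simp add: nth_append)
    then have "idx (ws ! j) = P ! j" using j k_def P_def by simp
    moreover have "ws ! (d - 1 - j) = Neg ! (k - 1 - j)"
    proof -
      have "\<not> d - 1 - j < length Pos" "d - 1 - j - length Pos = k - 1 - j" using j k_def dk by auto
      then show ?thesis using wsPN by (simp only: nth_append if_False)
    qed
    then have "idx (ws ! (d - 1 - j)) = N ! (k - 1 - j)" using j kN N_def by simp
    moreover have "rev N ! j = N ! (k - 1 - j)" using j kN N_def by (simp add: rev_nth)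
    ultimately show ?thesis using eqP by simp
  qed
  have symm: "idx (ws ! j) = idx (ws ! (d - 1 - j))" if j: "j < d" for j
  proof (cases "j < k")
    case True then show ?thesis using sym0 by blast
  next
    case False
    then have "d - 1 - j < k" "d - 1 - (d - 1 - j) = j" using j dk by auto
    then show ?thesis using sym0[of "d - 1 - j"] by simp
  qed
  have posn: "\<exists>q. q < d \<and> fst (ws ! q) = l \<and> tau ws l = Suc q" if l: "l \<in> {1..d}" for l
  proof -
    have "l \<in> set (map fst ws)" using lab(1) l by simp
    then have ex1: "\<exists>!q. q < length (map fst ws) \<and> map fst ws ! q = l" using distinct_Ex1 lab(2) by metis
    have eqv: "\<And>q. (q < length (map fst ws) \<and> map fst ws ! q = l) = (q < length ws \<and> fst (ws ! q) = l)" by auto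
    have ex1': "\<exists>!q. q < length ws \<and> fst (ws ! q) = l" using ex1 unfolding eqv .
    have "(THE q. q < length ws \<and> fst (ws ! q) = l) < length ws \<and> fst (ws ! (THE q. q < length ws \<and> fst (ws ! q) = l)) = l"
      using theI'[OF ex1'] .
    then show ?thesis unfolding tau_def using lab(3) by blast
  qed
  have idxeq: "idx (ws ! q) = i0 \<longleftrightarrow> i (fst (ws ! q)) = i0" if "q < d" for q
  proof -
    have "ws ! q \<in> set ws" using that lab(3) by simp
    then show ?thesis using einv unfolding einv_def idx_def by auto
  qed
  show ?thesis
  proof (intro ballI)
    fix B x y assume B: "B \<in> pi_part d (tau ws)" and x: "x \<in> B" and y: "y \<in> B"
    have "\<exists>l m. B = {l, m} \<and> l \<in> {1..d} \<and> m \<in> {1..d} \<and> tau ws l + tau ws m = d + 1"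
      using B unfolding pi_part_def by simp
    then obtain l m where Blm: "B = {l, m}" and l: "l \<in> {1..d}" and m: "m \<in> {1..d}" and tlm: "tau ws l + tau ws m = d + 1"
      by blast
    obtain ql where ql: "ql < d" "fst (ws ! ql) = l" "tau ws l = Suc ql" using posn l by blast
    obtain qm where qm: "qm < d" "fst (ws ! qm) = m" "tau ws m = Suc qm" using posn m by blast
    have "qm = d - 1 - ql" using tlm ql qm by simp
    then have "idx (ws ! ql) = idx (ws ! qm)" using symm[OF ql(1)] by simp
    moreover have "idx (ws ! ql) = i0 \<longleftrightarrow> i l = i0" using idxeq[OF ql(1)] ql(2) by simp
    moreover have "idx (ws ! qm) = i0 \<longleftrightarrow> i m = i0" using idxeq[OF qm(1)] qm(2) by simp
    ultimately have "(i l = i0) \<longleftrightarrow> (i m = i0)" by simp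
    then show "(i x = Min (i ` {1..d})) \<longleftrightarrow> (i y = Min (i ` {1..d}))"
      using x y Blm unfolding i0_def by auto
  qed
qed

end
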